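(* Let $(E,C)$ be a finite bipartite separated graph and $H\in\mathcal H(E,C)$. Put $$H_1:=\bigcup\{s_1(X(x)):x\in E^1,\ s(x)\in H\}\ \cup\ (H\cap E_1^{0,0}).$$ Then $H_1\in\mathcal H(E_1,C^1)$, and $H\cup H_1\in\mathcal H(F_1,D^1)$ is the hereditary closure of $H$ inside $(F_1,D^1)$.
   Context: A separated graph $(E,C)$: directed graph $E=(E^0,E^1,r,s)$ with $C=\bigsqcup_vC_v$, $C_v$ a partition of $r^{-1}(v)$ into non-empty sets. Finite bipartite: $E$ finite, $E^0=E^{0,0}\sqcup E^{0,1}$, $s(E^1)=E^{0,1}$, $r(E^1)=E^{0,0}$. Write $C_u=\{X^u_1,\dots,X^u_{k_u}\}$ for $u\in E^{0,0}$. $(E_1,C^1)$ has $E_1^{0,0}=E^{0,1}$, $E_1^{0,1}=\{v(x_1,\dots,x_{k_u}):u\in E^{0,0},x_j\in X^u_j\}$, edges $\alpha^{x_i}(x_1,\dots,\widehat{x_i},\dots,x_{k_u})$ ($1\le i\le k_u$) with range $r_1=s(x_i)$ and source $s_1=v(x_1,\dots,x_{k_u})$, and $C^1_v=\{X(x):x\in s^{-1}(v)\}$ where $X(x_i)=\{\alpha^{x_i}(x_1,\dots,\widehat{x_i},\dots,x_{k_u}):x_j\in X^u_j\ (j\ne i)\}$. $(F_1,D^1)$ is the separated graph $(E,C)\cup(E_1,C^1)$ obtained by identifying $E^{0,1}$ with $E_1^{0,0}$. For a separated graph $(F,D)$, $H\subseteq F^0$ is hereditary if $r(e)\in H$ implies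 $s(e)\in H$, and $D$-saturated if, for $v\in F^0$ and $X\in D_v$, $s(X)\subseteq H$ implies $v\in H$; $\mathcal H(F,D)$ denotes the set of hereditary $D$-saturated subsets. *)

theory Defs
  imports Main
begin

definition separated_graph ::
  "'v set \<Rightarrow> 'e set \<Rightarrow> ('e \<Rightarrow> 'v) \<Rightarrow> ('e \<Rightarrow> 'v) \<Rightarrow> ('v \<Rightarrow> 'e set set) \<Rightarrow> bool" where
  "separated_graph V Ed r s C \<longleftrightarrow>
     (\<forall>e\<in>Ed. r e \<in> V \<and> s e \<in> V) \<and>
     (\<forall>v\<in>V. (\<forall>X\<in>C v. X \<noteq> {}) \<and> \<Union>(C v) = {e\<in>Ed. r e = v} \<and> pairwise disjnt (C v))"

definition finite_bipartite_sep ::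
  "'v set \<Rightarrow> 'e set \<Rightarrow> ('e \<Rightarrow> 'v) \<Rightarrow> ('e \<Rightarrow> 'v) \<Rightarrow> ('v \<Rightarrow> 'e set set) \<Rightarrow> 'v set \<Rightarrow> 'v set \<Rightarrow> bool" where
  "finite_bipartite_sep V Ed r s C V0 V1 \<longleftrightarrow>
     separated_graph V Ed r s C \<and> finite V \<and> finite Ed \<and>
     V = V0 \<union> V1 \<and> V0 \<inter> V1 = {} \<and> s ` Ed \<subseteq> V1 \<and> r ` Ed \<subseteq> V0"

definition hereditary :: "'e set \<Rightarrow> ('e \<Rightarrow> 'v) \<Rightarrow> ('e \<Rightarrow> 'v) \<Rightarrow> 'v set \<Rightarrow> bool" where
  "hereditary Ed r s H \<longleftrightarrow> (\<forall>e\<in>Ed. r e \<in> H \<longrightarrow> s e \<in> H)"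

definition saturated :: "'v set \<Rightarrow> ('e \<Rightarrow> 'v) \<Rightarrow> ('v \<Rightarrow> 'e set set) \<Rightarrow> 'v set \<Rightarrow> bool" where
  "saturated V s C H \<longleftrightarrow> (\<forall>v\<in>V. \<forall>X\<in>C v. s ` X \<subseteq> H \<longrightarrow> v \<in> H)"

definition HS ::
  "'v set \<Rightarrow> 'e set \<Rightarrow> ('e \<Rightarrow> 'v) \<Rightarrow> ('e \<Rightarrow> 'v) \<Rightarrow> ('v \<Rightarrow> 'e set set) \<Rightarrow> 'v set set" where
  "HS V Ed r s C = {H. H \<subseteq> V \<and> hereditary Ed r s H \<and> saturated V s C H}"

definition hered_closure :: "'v set \<Rightarrow> 'e set \<Rightarrow> ('e \<Rightarrow> 'v) \<Rightarrow> ('e \<Rightarrow> 'v) \<Rightarrow> 'v set \<Rightarrow> 'v set" where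
  "hered_closure V Ed r s A = \<Inter>{K. A \<subseteq> K \<and> K \<subseteq> V \<and> hereditary Ed r s K}"

text \<open>A tuple (x_1,...,x_k_u) with x_j in X^u_j is encoded as (u, S) with S = {x_1,...,x_k_u},
  a transversal of the partition C u.  Vertices of F_1: Inl v (old vertices of E) and
  Inr (u,S) (new vertices v(x_1,...,x_k_u)).  Edges of F_1: Inl e (old edges) and
  Inr (x_i, (u,S)) encoding alpha^{x_i}(x_1,..,hat x_i,..,x_k_u).\<close>

definition transversals :: "('v \<Rightarrow> 'e set set) \<Rightarrow> 'v \<Rightarrow> 'e set set" where
  "transversals C u = {S. S \<subseteq> \<Union>(C u) \<and> (\<forall>X\<in>C u. \<exists>!x. x \<in> S \<and> x \<in> X)}"

type_synonym ('v,'e) newv = "'v \<times> 'e set"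
type_synonym ('v,'e) F1v = "'v + ('v,'e) newv"
type_synonym ('v,'e) F1e = "'e + ('e \<times> ('v,'e) newv)"

definition E1_new_vertices :: "('v \<Rightarrow> 'e set set) \<Rightarrow> 'v set \<Rightarrow> ('v,'e) F1v set" where
  "E1_new_vertices C V0 = {Inr (u, S) | u S. u \<in> V0 \<and> S \<in> transversals C u}"

definition E1_vertices :: "('v \<Rightarrow> 'e set set) \<Rightarrow> 'v set \<Rightarrow> 'v set \<Rightarrow> ('v,'e) F1v set" where
  "E1_vertices C V0 V1 = Inl ` V1 \<union> E1_new_vertices C V0"

definition E1_edges :: "('v \<Rightarrow> 'e set set) \<Rightarrow> 'v set \<Rightarrow> ('v,'e) F1e set" where
  "E1_edges C V0 = {Inr (x, (u, S)) | x u S. u \<in> V0 \<and> S \<in> transversals C u \<and> x \<in> S}"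

text \<open>range and source maps of F_1 (restricting to E_1 edges gives r_1, s_1)\<close>
definition F1_r :: "('e \<Rightarrow> 'v) \<Rightarrow> ('e \<Rightarrow> 'v) \<Rightarrow> ('v,'e) F1e \<Rightarrow> ('v,'e) F1v" where
  "F1_r r s f = (case f of Inl e \<Rightarrow> Inl (r e) | Inr (x, p) \<Rightarrow> Inl (s x))"

definition F1_s :: "('e \<Rightarrow> 'v) \<Rightarrow> ('v,'e) F1e \<Rightarrow> ('v,'e) F1v" where
  "F1_s s f = (case f of Inl e \<Rightarrow> Inl (s e) | Inr (x, p) \<Rightarrow> Inr p)"

definition Xset :: "('e \<Rightarrow> 'v) \<Rightarrow> ('v \<Rightarrow> 'e set set) \<Rightarrow> 'e \<Rightarrow> ('v,'e) F1e set" where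
  "Xset r C x = {Inr (x, (r x, S)) | S. S \<in> transversals C (r x) \<and> x \<in> S}"

definition C1 ::
  "'e set \<Rightarrow> ('e \<Rightarrow> 'v) \<Rightarrow> ('e \<Rightarrow> 'v) \<Rightarrow> ('v \<Rightarrow> 'e set set) \<Rightarrow> 'v set \<Rightarrow> ('v,'e) F1v \<Rightarrow> ('v,'e) F1e set set" where
  "C1 Ed r s C V1 w = (case w of
      Inl v \<Rightarrow> (if v \<in> V1 then {Xset r C x | x. x \<in> Ed \<and> s x = v} else {})
    | Inr _ \<Rightarrow> {})"

definition F1_vertices :: "'v set \<Rightarrow> ('v \<Rightarrow> 'e set set) \<Rightarrow> 'v set \<Rightarrow> ('v,'e) F1v set" where
  "F1_vertices V C V0 = Inl ` V \<union> E1_new_vertices C V0"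

definition F1_edges :: "'e set \<Rightarrow> ('v \<Rightarrow> 'e set set) \<Rightarrow> 'v set \<Rightarrow> ('v,'e) F1e set" where
  "F1_edges Ed C V0 = Inl ` Ed \<union> E1_edges C V0"

text \<open>D^1 = C on E^{0,0} and C^1 on E^{0,1} = E_1^{0,0}; empty on new vertices.\<close>
definition D1 ::
  "'e set \<Rightarrow> ('e \<Rightarrow> 'v) \<Rightarrow> ('e \<Rightarrow> 'v) \<Rightarrow> ('v \<Rightarrow> 'e set set) \<Rightarrow> 'v set \<Rightarrow> ('v,'e) F1v \<Rightarrow> ('v,'e) F1e set set" where
  "D1 Ed r s C V1 w = (case w of
      Inl v \<Rightarrow> (if v \<in> V1 then C1 Ed r s C V1 w else (\<lambda>X. Inl ` X) ` C v)
    | Inr _ \<Rightarrow> {})"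

end

theory Submission
  imports Defs
begin

lemma trans_exists:
  assumes sep: "separated_graph V Ed r s C"
    and u: "u \<in> V" and x: "x \<in> Ed" "r x = u" and sx: "s x \<notin> H"
    and her: "hereditary Ed r s H" and sat: "saturated V s C H"
  shows "\<exists>S. S \<in> transversals C u \<and> x \<in> S \<and> (\<forall>y\<in>S. s y \<notin> H)"
proof -
  have ne: "\<forall>X\<in>C u. X \<noteq> {}" and un: "\<Union>(C u) = {e\<in>Ed. r e = u}" and dj: "pairwise disjnt (C u)"
    using sep u unfolding separated_graph_def by auto
  have uH: "u \<notin> H" using her x sx unfolding hereditary_def by auto
  define f where "f X = (if x \<in> X then x else SOME y. y \<in> X \<and> s y \<notin> H)" for X
  have fX: "f X \<in> X \<and> s (f X) \<notin> H" if X: "X \<in> C u" for X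
  proof (cases "x \<in> X")
    case True then show ?thesis using sx by (simp add: f_def)
  next
    case False
    have "\<exists>y. y \<in> X \<and> s y \<notin> H"
    proof (rule ccontr)
      assume "\<not> ?thesis"
      then have "s ` X \<subseteq> H" by auto
      then have "u \<in> H" using sat u X unfolding saturated_def by auto
      then show False using uH by simp
    qed
    then have "(SOME y. y \<in> X \<and> s y \<notin> H) \<in> X \<and> s (SOME y. y \<in> X \<and> s y \<notin> H) \<notin> H"
      by (rule someI_ex)
    then show ?thesis using False unfolding f_def by simp
  qed
  define S where "S = f ` C u"
  have "S \<in> transversals C u"
    unfolding transversals_def
  proof (intro CollectI conjI ballI)
    show "S \<subseteq> \<Union>(C u)" using fX unfolding S_def by blast
  next
    fix X assume X: "X \<in> C u"
    show "\<exists>!y. y \<in> S \<and> y \<in> X"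
    proof (rule ex1I[of _ "f X"])
      show "f X \<in> S \<and> f X \<in> X" using X fX unfolding S_def by blast
    next
      fix y assume y: "y \<in> S \<and> y \<in> X"
      then obtain Y where Y: "Y \<in> C u" "y = f Y" unfolding S_def by blast
      have "y \<in> Y" using fX Y by blast
      then have "Y = X" using dj X Y y unfolding pairwise_def disjnt_def by blast
      then show "y = f X" using Y by simp
    qed
  qed
  moreover have "x \<in> S"
  proof -
    have "x \<in> \<Union>(C u)" using un x by auto
    then obtain X where "X \<in> C u" "x \<in> X" by blast
    then show ?thesis unfolding S_def f_def by force
  qed
  moreover have "\<forall>y\<in>S. s y \<notin> H" using fX unfolding S_def by blast
  ultimately show ?thesis by blast
qed

theorem lemma5:
  fixes V :: "'v set" and Ed :: "'e set" and r s :: "'e \<Rightarrow> 'v"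
    and C :: "'v \<Rightarrow> 'e set set" and V0 V1 H :: "'v set"
  assumes "finite_bipartite_sep V Ed r s C V0 V1"
    and "H \<in> HS V Ed r s C"
  defines "H1 \<equiv> \<Union>{F1_s s ` Xset r C x | x. x \<in> Ed \<and> s x \<in> H} \<union> Inl ` (H \<inter> V1)"
  shows "H1 \<in> HS (E1_vertices C V0 V1) (E1_edges C V0) (F1_r r s) (F1_s s) (C1 Ed r s C V1) \<and>
         Inl ` H \<union> H1 \<in> HS (F1_vertices V C V0) (F1_edges Ed C V0) (F1_r r s) (F1_s s) (D1 Ed r s C V1) \<and>
         Inl ` H \<union> H1 = hered_closure (F1_vertices V C V0) (F1_edges Ed C V0) (F1_r r s) (F1_s s) (Inl ` H)"
proof -
  have sep: "separated_graph V Ed r s C" and VV: "V = V0 \<union> V1" "V0 \<inter> V1 = {}"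
    and sE: "s ` Ed \<subseteq> V1" and rE: "r ` Ed \<subseteq> V0"
    using assms(1) unfolding finite_bipartite_sep_def by auto
  have HV: "H \<subseteq> V" and her: "hereditary Ed r s H" and sat: "saturated V s C H"
    using assms(2) unfolding HS_def by auto
  have un: "\<And>u. u \<in> V \<Longrightarrow> \<Union>(C u) = {e\<in>Ed. r e = u}"
    using sep unfolding separated_graph_def by auto
  have memH1: "w \<in> H1 \<longleftrightarrow> (\<exists>v. w = Inl v \<and> v \<in> H \<and> v \<in> V1) \<or>
      (\<exists>x S. w = Inr (r x, S) \<and> x \<in> Ed \<and> s x \<in> H \<and> S \<in> transversals C (r x) \<and> x \<in> S)" for w
  proof -
    have img: "F1_s s ` Xset r C x = {Inr (r x, S) | S. S \<in> transversals C (r x) \<and> x \<in> S}" for x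
      unfolding Xset_def F1_s_def by force
    show ?thesis unfolding H1_def img by blast
  qed
  have Inl_H1: "Inl v \<in> H1 \<longleftrightarrow> v \<in> H \<and> v \<in> V1" for v using memH1 by auto
  have Inr_H1: "Inr (u, S) \<in> H1 \<longleftrightarrow> (\<exists>x. u = r x \<and> x \<in> Ed \<and> s x \<in> H \<and> S \<in> transversals C u \<and> x \<in> S)" for u S
    using memH1 by auto
  have edgeE1: "x \<in> Ed \<and> r x = u" if "u \<in> V0" "S \<in> transversals C u" "x \<in> S" for x u S
  proof -
    have "x \<in> \<Union>(C u)" using that unfolding transversals_def by auto
    then show ?thesis using un[of u] that VV by auto
  qed
  have keysat: "s x \<in> H" if x: "x \<in> Ed" and sub: "F1_s s ` Xset r C x \<subseteq> H1" for x
  proof (rule ccontr)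
    assume sx: "s x \<notin> H"
    have u: "r x \<in> V" using rE x VV by auto
    obtain S where S: "S \<in> transversals C (r x)" "x \<in> S" "\<forall>y\<in>S. s y \<notin> H"
      using trans_exists[OF sep u x refl sx her sat] by blast
    have "Inr (r x, S) \<in> F1_s s ` Xset r C x"
      unfolding Xset_def F1_s_def using S by force
    then have "Inr (r x, S) \<in> H1" using sub by blast
    then obtain y where "r x = r y" "y \<in> Ed" "s y \<in> H" "y \<in> S" using Inr_H1 by blast
    then show False using S by auto
  qed
  have satC1: "v \<in> H" if hv: "v \<in> V1" "X \<in> C1 Ed r s C V1 (Inl v)" "F1_s s ` X \<subseteq> H1" for v X
  proof -
    obtain x where "X = Xset r C x" "x \<in> Ed" "s x = v" using hv unfolding C1_def by auto
    then show ?thesis using keysat hv by auto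
  qed
  have H1sub: "H1 \<subseteq> E1_vertices C V0 V1"
  proof
    fix w assume "w \<in> H1"
    then show "w \<in> E1_vertices C V0 V1"
      unfolding memH1 E1_vertices_def E1_new_vertices_def using rE by auto
  qed
  have herE1: "Inr (u, S) \<in> H1" if "u \<in> V0" "S \<in> transversals C u" "x \<in> S" "Inl (s x) \<in> H1" for x u S
    using edgeE1[OF that(1-3)] that Inr_H1 Inl_H1 by auto
  have P1: "H1 \<in> HS (E1_vertices C V0 V1) (E1_edges C V0) (F1_r r s) (F1_s s) (C1 Ed r s C V1)"
    unfolding HS_def
  proof (intro CollectI conjI)
    show "H1 \<subseteq> E1_vertices C V0 V1" by (rule H1sub)
    show "hereditary (E1_edges C V0) (F1_r r s) (F1_s s) H1"
      unfolding hereditary_def E1_edges_def F1_r_def F1_s_def using herE1 by auto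
    show "saturated (E1_vertices C V0 V1) (F1_s s) (C1 Ed r s C V1) H1"
      unfolding saturated_def
    proof (intro ballI impI)
      fix w X assume w: "w \<in> E1_vertices C V0 V1" and X: "X \<in> C1 Ed r s C V1 w" and sub: "F1_s s ` X \<subseteq> H1"
      then obtain v where v: "w = Inl v" "v \<in> V1" unfolding C1_def by (auto split: sum.splits if_splits)
      then have "v \<in> H" using satC1 X sub by auto
      then show "w \<in> H1" using v Inl_H1 by auto
    qed
  qed
  let ?K = "Inl ` H \<union> H1"
  have Ksub: "?K \<subseteq> F1_vertices V C V0"
    using HV H1sub VV unfolding F1_vertices_def E1_vertices_def by auto
  have InlK: "Inl v \<in> ?K \<longleftrightarrow> v \<in> H" for v using Inl_H1 by auto
  have herK: "hereditary (F1_edges Ed C V0) (F1_r r s) (F1_s s) ?K"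
    unfolding hereditary_def
  proof (intro ballI impI)
    fix f assume f: "f \<in> F1_edges Ed C V0" and rf: "F1_r r s f \<in> ?K"
    show "F1_s s f \<in> ?K"
    proof (cases f)
      case (Inl e)
      then have "e \<in> Ed" "r e \<in> H" using f rf InlK unfolding F1_edges_def E1_edges_def F1_r_def by auto
      then have "s e \<in> H" using her unfolding hereditary_def by auto
      then show ?thesis using Inl unfolding F1_s_def by auto
    next
      case (Inr p)
      then obtain x u S where p: "f = Inr (x, (u, S))" "u \<in> V0" "S \<in> transversals C u" "x \<in> S"
        using f unfolding F1_edges_def E1_edges_def by auto
      have "s x \<in> H" using rf p InlK unfolding F1_r_def by auto
      then have "s x \<in> V1" using edgeE1[OF p(2-4)] sE by auto
      with \<open>s x \<in> H\<close> have "Inl (s x) \<in> H1" using Inl_H1 by auto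
      then have "Inr (u, S) \<in> H1" using herE1 p by auto
      then show ?thesis using p unfolding F1_s_def by auto
    qed
  qed
  have P2: "?K \<in> HS (F1_vertices V C V0) (F1_edges Ed C V0) (F1_r r s) (F1_s s) (D1 Ed r s C V1)"
    unfolding HS_def
  proof (intro CollectI conjI)
    show "?K \<subseteq> F1_vertices V C V0" by (rule Ksub)
    show "hereditary (F1_edges Ed C V0) (F1_r r s) (F1_s s) ?K" by (rule herK)
    show "saturated (F1_vertices V C V0) (F1_s s) (D1 Ed r s C V1) ?K"
      unfolding saturated_def
    proof (intro ballI impI)
      fix w X assume w: "w \<in> F1_vertices V C V0" and X: "X \<in> D1 Ed r s C V1 w" and sub: "F1_s s ` X \<subseteq> ?K"
      then obtain v where v: "w = Inl v" unfolding D1_def by (auto split: sum.splits)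
      have vV: "v \<in> V" using w v VV unfolding F1_vertices_def E1_new_vertices_def by auto
      show "w \<in> ?K"
      proof (cases "v \<in> V1")
        case True
        then have XC: "X \<in> C1 Ed r s C V1 (Inl v)" using X v unfolding D1_def by auto
        then obtain x where x: "X = Xset r C x" "x \<in> Ed" "s x = v" using True unfolding C1_def by auto
        have "F1_s s ` X \<subseteq> H1"
        proof
          fix y assume "y \<in> F1_s s ` X"
          then have "y \<in> ?K" "\<exists>p. y = Inr p" using sub x unfolding Xset_def F1_s_def by auto
          then show "y \<in> H1" by auto
        qed
        then have "v \<in> H" using satC1 True XC by blast
        then show ?thesis using v by auto
      next
        case False
        then obtain Y where Y: "Y \<in> C v" "X = Inl ` Y" using X v unfolding D1_def by auto
        have "s ` Y \<subseteq> H"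
        proof
          fix z assume "z \<in> s ` Y"
          then obtain e where "e \<in> Y" "z = s e" by auto
          then have "Inl z \<in> ?K" using sub Y unfolding F1_s_def by force
          then show "z \<in> H" using InlK by blast
        qed
        then have "v \<in> H" using sat vV Y unfolding saturated_def by auto
        then show ?thesis using v by auto
      qed
    qed
  qed
  have P3: "?K = hered_closure (F1_vertices V C V0) (F1_edges Ed C V0) (F1_r r s) (F1_s s) (Inl ` H)"
    unfolding hered_closure_def
  proof (rule antisym)
    show "\<Inter>{K. Inl ` H \<subseteq> K \<and> K \<subseteq> F1_vertices V C V0 \<and> hereditary (F1_edges Ed C V0) (F1_r r s) (F1_s s) K} \<subseteq> ?K"
      using Ksub herK by (intro Inter_lower) auto
    show "?K \<subseteq> \<Inter>{K. Inl ` H \<subseteq> K \<and> K \<subseteq> F1_vertices V C V0 \<and> hereditary (F1_edges Ed C V0) (F1_r r s) (F1_s s) K}"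
    proof (rule Inter_greatest)
      fix K assume "K \<in> {K. Inl ` H \<subseteq> K \<and> K \<subseteq> F1_vertices V C V0 \<and> hereditary (F1_edges Ed C V0) (F1_r r s) (F1_s s) K}"
      then have K: "Inl ` H \<subseteq> K" "hereditary (F1_edges Ed C V0) (F1_r r s) (F1_s s) K" by auto
      show "?K \<subseteq> K"
      proof
        fix w assume "w \<in> ?K"
        then consider "w \<in> Inl ` H" | x S where "w = Inr (r x, S)" "x \<in> Ed" "s x \<in> H" "S \<in> transversals C (r x)" "x \<in> S"
          using memH1 by blast
        then show "w \<in> K"
        proof cases
          case 1 then show ?thesis using K by auto
        next
          case 2
          have e: "Inr (x, (r x, S)) \<in> F1_edges Ed C V0"
            using 2 rE unfolding F1_edges_def E1_edges_def by auto
          have "F1_r r s (Inr (x, (r x, S))) \<in> K" using K 2 unfolding F1_r_def by auto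
          then have "F1_s s (Inr (x, (r x, S))) \<in> K" using K(2) e unfolding hereditary_def by blast
          then show ?thesis using 2 unfolding F1_s_def by auto
        qed
      qed
    qed
  qed
  show ?thesis using P1 P2 P3 by blast
qed

end
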